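(* Assume $\mu_n\to0$. Then $\hat\theta_A$ is uniformly consistent for $\theta$: for every $\varepsilon>0$, $$\lim_{n\to\infty}\sup_{\theta\in\mathbb R}P_{n,\theta}\big(|\hat\theta_A-\theta|>\varepsilon\big)=0.$$ Furthermore, with $a_n=\min(n^{1/2},\mu_n^{-1})$, for every $\varepsilon>0$ there exists a real $M\ge0$ such that $$\sup_{n\in\mathbb N}\sup_{\theta\in\mathbb R}P_{n,\theta}\big(a_n|\hat\theta_A-\theta|>M\big)<\varepsilon .$$
   Context: Gaussian location model: for each sample size $n$, $y_1,\dots,y_n$ are i.i.d. $N(\theta,1)$ with $\theta\in\mathbb R$ unknown; $\bar y$ is their mean. $P_{n,\theta}$ denotes the probability governing a sample of size $n$ when $\theta$ is the true parameter. Given a nonrandom tuning parameter $\mu_n>0$, the adaptive LASSO estimator is $\hat\theta_A=0$ if $|\bar y|\le\mu_n$ and $\hat\theta_A=\bar y-\mu_n^2/\bar y$ if $|\bar y|>\mu_n$. *)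

theory Defs
  imports "HOL-Probability.Probability"
begin

definition sample_law :: "nat \<Rightarrow> real \<Rightarrow> (nat \<Rightarrow> real) measure" where
  "sample_law n \<theta> = (\<Pi>\<^sub>M i\<in>{..<n}. density lborel (normal_density \<theta> 1))"

definition sample_mean :: "nat \<Rightarrow> (nat \<Rightarrow> real) \<Rightarrow> real" where
  "sample_mean n y = (\<Sum>i<n. y i) / real n"

text \<open>Adaptive LASSO estimator as a function of the sample mean, tuning parameter mu.\<close>
definition alasso :: "real \<Rightarrow> real \<Rightarrow> real" where
  "alasso \<mu> yb = (if \<bar>yb\<bar> \<le> \<mu> then 0 else yb - \<mu>\<^sup>2 / yb)"

end

theory Submission
  imports Defs
begin


lemma law_facts:
  assumes n: "n \<ge> 1"
  shows "prob_space (sample_law n \<theta>)"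
    and "distributed (sample_law n \<theta>) lborel (\<lambda>y. \<Sum>i<n. y i)
           (normal_density (real n * \<theta>) (sqrt (real n)))"
proof -
  let ?N = "density lborel (normal_density \<theta> 1)"
  let ?P = "sample_law n \<theta>"
  have pN: "prob_space ?N" by (rule prob_space_normal_density) simp
  show pP: "prob_space ?P" unfolding sample_law_def by (rule prob_space_PiM) (rule pN)
  interpret P: prob_space ?P by (rule pP)
  have comp: "distr ?P lborel (\<lambda>y. y i) = ?N" if "i < n" for i
  proof -
    have "distr ?P lborel (\<lambda>y. y i) = distr ?P ?N (\<lambda>y. y i)"
      by (rule distr_cong) auto
    also have "\<dots> = ?N" unfolding sample_law_def
      by (rule distr_PiM_component) (use pN that in auto)
    finally show ?thesis .
  qed
  have rv: "(\<lambda>y. y i) \<in> measurable ?P lborel" if "i \<in> {..<n}" for i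
  proof -
    have "(\<lambda>y. y i) \<in> measurable ?P ?N" unfolding sample_law_def
      using that by (rule measurable_component_singleton)
    then show ?thesis by (simp cong: measurable_cong_sets)
  qed
  have comp': "distr ?P borel (\<lambda>y. y i) = ?N" if "i < n" for i
  proof -
    have "distr ?P borel (\<lambda>y. y i) = distr ?P lborel (\<lambda>y. y i)"
      by (rule distr_cong) auto
    then show ?thesis using comp[OF that] by simp
  qed
  have ind: "P.indep_vars (\<lambda>i. borel) (\<lambda>i y. y i) {..<n}"
  proof (subst P.indep_vars_iff_distr_eq_PiM')
    show "{..<n} \<noteq> {}" using n by (auto simp: lessThan_empty_iff)
    show "(\<lambda>y. y i) \<in> measurable ?P borel" if "i \<in> {..<n}" for i using rv[OF that] by (simp cong: measurable_cong_sets)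
    have "distr ?P (\<Pi>\<^sub>M i\<in>{..<n}. borel) (\<lambda>x. \<lambda>i\<in>{..<n}. x i) = distr ?P ?P (\<lambda>x. x)"
    proof (rule distr_cong)
      show "sets (\<Pi>\<^sub>M i\<in>{..<n}. borel) = sets ?P" unfolding sample_law_def
        by (rule sets_PiM_cong) auto
      show "(\<lambda>i\<in>{..<n}. x i) = x" if "x \<in> space ?P" for x
        using that unfolding sample_law_def by (auto simp: space_PiM PiE_def extensional_def fun_eq_iff)
    qed simp
    also have "\<dots> = ?P" by simp
    also have "?P = (\<Pi>\<^sub>M i\<in>{..<n}. distr ?P borel (\<lambda>y. y i))"
      unfolding sample_law_def[of n \<theta>] by (rule PiM_cong) (auto simp: comp'[unfolded sample_law_def])
    finally show "distr ?P (\<Pi>\<^sub>M i\<in>{..<n}. borel) (\<lambda>x. \<lambda>i\<in>{..<n}. x i) = (\<Pi>\<^sub>M i\<in>{..<n}. distr ?P borel (\<lambda>y. y i))" .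
  qed
  have dist1: "distributed ?P lborel (\<lambda>y. y i) (normal_density \<theta> 1)" if "i \<in> {..<n}" for i
    unfolding distributed_def using comp[of i] rv[OF that] that by auto
  have "distributed ?P lborel (\<lambda>x. \<Sum>i\<in>{..<n}. x i)
     (normal_density (\<Sum>i\<in>{..<n}. \<theta>) (sqrt (\<Sum>i\<in>{..<n}. (1::real)\<^sup>2)))"
    by (rule P.sum_indep_normal[where X="\<lambda>i y. y i"]) (use n ind dist1 in \<open>auto simp: lessThan_empty_iff\<close>)
  then show "distributed ?P lborel (\<lambda>y. \<Sum>i<n. y i) (normal_density (real n * \<theta>) (sqrt (real n)))"
    by simp
qed


lemma tail:
  assumes n: "n \<ge> 1" and t: "t > 0"
  shows "measure (sample_law n \<theta>) {y \<in> space (sample_law n \<theta>). \<bar>sample_mean n y - \<theta>\<bar> \<ge> t}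
          \<le> 1 / (real n * t\<^sup>2)"
proof -
  let ?P = "sample_law n \<theta>"
  interpret P: prob_space ?P by (rule law_facts(1)[OF n])
  note D = law_facts(2)[OF n, of \<theta>]
  have npos: "real n > 0" using n by simp
  have sq: "sqrt (real n) > 0" using npos by simp
  let ?f = "\<lambda>y. (\<Sum>i<n. y i) - real n * \<theta>"
  have Smeas: "(\<lambda>y. \<Sum>i<n. y i) \<in> borel_measurable ?P"
    using distributed_measurable[OF D] by (simp cong: measurable_cong_sets)
  have fmeas: "?f \<in> borel_measurable ?P" using Smeas by measurable
  have int: "integrable ?P (\<lambda>y. ?f y ^ 2)"
  proof -
    have "integrable lborel (\<lambda>x. normal_density (real n * \<theta>) (sqrt (real n)) x * (x - real n * \<theta>) ^ 2)"
      by (rule integrable_normal_moment) (rule sq)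
    then show ?thesis
      using distributed_integrable[OF D, of "\<lambda>x. (x - real n * \<theta>) ^ 2"] by simp
  qed
  have intval: "(\<integral>y. ?f y ^ 2 \<partial>?P) = real n"
  proof -
    have "(\<integral>y. ?f y ^ 2 \<partial>?P) = (\<integral>x. normal_density (real n * \<theta>) (sqrt (real n)) x * (x - real n * \<theta>) ^ (2*1) \<partial>lborel)"
      using distributed_integral[OF D, of "\<lambda>x. (x - real n * \<theta>) ^ 2"] by simp
    also have "\<dots> = fact (2 * 1) / ((2 / (sqrt (real n))\<^sup>2)^1 * fact 1)"
      by (rule integral_normal_moment_even) (rule sq)
    also have "\<dots> = real n" using npos by simp
    finally show ?thesis .
  qed
  have nt: "real n * t > 0" using npos t by simp
  have "measure ?P {y \<in> space ?P. \<bar>?f y\<bar> \<ge> real n * t} \<le> (\<integral>y. ?f y ^ 2 \<partial>?P) / (real n * t)\<^sup>2"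
    by (rule P.second_moment_method[OF fmeas int nt])
  also have "\<dots> = 1 / (real n * t\<^sup>2)" unfolding intval using npos t by (simp add: power2_eq_square field_simps)
  also have "{y \<in> space ?P. \<bar>?f y\<bar> \<ge> real n * t} = {y \<in> space ?P. \<bar>sample_mean n y - \<theta>\<bar> \<ge> t}"
  proof -
    have "\<bar>?f y\<bar> \<ge> real n * t \<longleftrightarrow> \<bar>sample_mean n y - \<theta>\<bar> \<ge> t" for y
    proof -
      have "?f y = real n * (sample_mean n y - \<theta>)" using npos
        by (simp add: sample_mean_def field_simps)
      then have "\<bar>?f y\<bar> = real n * \<bar>sample_mean n y - \<theta>\<bar>" using npos by (simp add: abs_mult)
      then show ?thesis using npos by (simp add: mult_le_cancel_left_pos)
    qed
    then show ?thesis by simp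
  qed
  finally show ?thesis .
qed


lemma tail_sets:
  assumes n: "n \<ge> 1"
  shows "{y \<in> space (sample_law n \<theta>). \<bar>sample_mean n y - \<theta>\<bar> \<ge> t} \<in> sets (sample_law n \<theta>)"
proof -
  have Smeas: "(\<lambda>y. \<Sum>i<n. y i) \<in> borel_measurable (sample_law n \<theta>)"
    using distributed_measurable[OF law_facts(2)[OF n, of \<theta>]] by (simp cong: measurable_cong_sets)
  have f: "(\<lambda>y. \<bar>sample_mean n y - \<theta>\<bar>) \<in> borel_measurable (sample_law n \<theta>)"
    unfolding sample_mean_def
    by (intro borel_measurable_abs borel_measurable_diff borel_measurable_divide Smeas) simp_all
  have "{y \<in> space (sample_law n \<theta>). \<bar>sample_mean n y - \<theta>\<bar> \<ge> t}
     = (\<lambda>y. \<bar>sample_mean n y - \<theta>\<bar>) -` {t..} \<inter> space (sample_law n \<theta>)" by auto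
  then show ?thesis using measurable_sets[OF f, of "{t..}"] by simp
qed

lemma alasso_bound:
  assumes "m > 0"
  shows "\<bar>alasso m yb - \<theta>\<bar> \<le> \<bar>yb - \<theta>\<bar> + m"
proof (cases "\<bar>yb\<bar> \<le> m")
  case True then show ?thesis by (simp add: alasso_def)
next
  case False
  then have yb: "\<bar>yb\<bar> > m" by simp
  have "\<bar>m\<^sup>2 / yb\<bar> = m * (m / \<bar>yb\<bar>)" using assms by (simp add: abs_divide power2_eq_square)
  also have "\<dots> \<le> m * 1" using assms yb by (intro mult_left_mono) auto
  finally have "\<bar>m\<^sup>2 / yb\<bar> \<le> m" by simp
  moreover have "\<bar>(yb - \<theta>) - m\<^sup>2 / yb\<bar> \<le> \<bar>yb - \<theta>\<bar> + \<bar>m\<^sup>2 / yb\<bar>"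
    by (rule abs_triangle_ineq4)
  ultimately show ?thesis using False by (simp add: alasso_def algebra_simps)
qed

lemma prob_bound:
  assumes n: "n \<ge> 1" and t: "t > 0"
    and sub: "\<And>y. P y \<Longrightarrow> \<bar>sample_mean n y - \<theta>\<bar> \<ge> t"
  shows "measure (sample_law n \<theta>) {y \<in> space (sample_law n \<theta>). P y} \<le> 1 / (real n * t\<^sup>2)"
proof -
  interpret P: prob_space "sample_law n \<theta>" by (rule law_facts(1)[OF n])
  have "measure (sample_law n \<theta>) {y \<in> space (sample_law n \<theta>). P y}
     \<le> measure (sample_law n \<theta>) {y \<in> space (sample_law n \<theta>). \<bar>sample_mean n y - \<theta>\<bar> \<ge> t}"
    by (rule P.finite_measure_mono[OF _ tail_sets[OF n]]) (use sub in auto)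
  also have "\<dots> \<le> 1 / (real n * t\<^sup>2)" by (rule tail[OF n t])
  finally show ?thesis .
qed

lemma prob_le1: "measure (sample_law n \<theta>) A \<le> 1"
proof (cases "n \<ge> 1")
  case True
  interpret P: prob_space "sample_law n \<theta>" by (rule law_facts(1)[OF True])
  show ?thesis by simp
next
  case False
  then have "n = 0" by simp
  interpret P: prob_space "sample_law 0 \<theta>" unfolding sample_law_def
    by (rule prob_space_PiM) simp
  show ?thesis using \<open>n = 0\<close> by simp
qed


lemma sup_le: "(\<And>\<theta>. f \<theta> \<le> (b::real)) \<Longrightarrow> (SUP \<theta>\<in>(UNIV::real set). f \<theta>) \<le> b"
  by (rule cSUP_least) auto

lemma sup_ge0: "(\<And>\<theta>. 0 \<le> f \<theta>) \<Longrightarrow> (\<And>\<theta>. f \<theta> \<le> (1::real)) \<Longrightarrow> 0 \<le> (SUP \<theta>\<in>(UNIV::real set). f \<theta>)"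
  by (rule order_trans[of 0 "f 0"]) (auto intro!: cSUP_upper bdd_aboveI2)

theorem theorem1:
  fixes \<mu> :: "nat \<Rightarrow> real"
  assumes mu_pos: "\<And>n. \<mu> n > 0"
    and mu_lim: "\<mu> \<longlonglongrightarrow> 0"
  shows "(\<forall>\<epsilon>>0. (\<lambda>n. SUP \<theta>\<in>(UNIV::real set).
            measure (sample_law n \<theta>)
              {y \<in> space (sample_law n \<theta>).
                 \<bar>alasso (\<mu> n) (sample_mean n y) - \<theta>\<bar> > \<epsilon>}) \<longlonglongrightarrow> 0) \<and>
          (\<forall>\<epsilon>>0. \<exists>M::real. M \<ge> 0 \<and>
            (SUP n\<in>{1::nat..}. SUP \<theta>\<in>(UNIV::real set).
               measure (sample_law n \<theta>)
                 {y \<in> space (sample_law n \<theta>).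
                    min (sqrt (real n)) (1 / \<mu> n) * \<bar>alasso (\<mu> n) (sample_mean n y) - \<theta>\<bar> > M})
            < \<epsilon>)"
proof (intro conjI allI impI)
  fix \<epsilon> :: real assume e: "\<epsilon> > 0"
  let ?g = "\<lambda>n. SUP \<theta>\<in>(UNIV::real set).
            measure (sample_law n \<theta>)
              {y \<in> space (sample_law n \<theta>).
                 \<bar>alasso (\<mu> n) (sample_mean n y) - \<theta>\<bar> > \<epsilon>}"
  let ?h = "\<lambda>n. (4 / \<epsilon>\<^sup>2) / real n"
  have ev1: "eventually (\<lambda>n. \<mu> n < \<epsilon> / 2) sequentially"
    using order_tendstoD(2)[OF mu_lim, of "\<epsilon>/2"] e by simp
  have ev: "eventually (\<lambda>n. \<mu> n < \<epsilon> / 2 \<and> n \<ge> 1) sequentially"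
    using ev1 eventually_ge_at_top[of "1::nat"] by (rule eventually_conj)
  show "?g \<longlonglongrightarrow> 0"
  proof (rule tendsto_sandwich[of "\<lambda>n. 0" _ _ ?h])
    show "eventually (\<lambda>n. 0 \<le> ?g n) sequentially"
      by (intro always_eventually allI sup_ge0 measure_nonneg prob_le1)
    show "eventually (\<lambda>n. ?g n \<le> ?h n) sequentially"
      using ev
    proof eventually_elim
      case (elim n)
      then have n: "n \<ge> 1" and mu: "\<mu> n < \<epsilon> / 2" by auto
      show ?case
      proof (rule sup_le)
        fix \<theta>
        have "measure (sample_law n \<theta>) {y \<in> space (sample_law n \<theta>).
                 \<bar>alasso (\<mu> n) (sample_mean n y) - \<theta>\<bar> > \<epsilon>} \<le> 1 / (real n * (\<epsilon>/2)\<^sup>2)"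
        proof (rule prob_bound[OF n])
          show "\<epsilon>/2 > 0" using e by simp
          fix y assume "\<bar>alasso (\<mu> n) (sample_mean n y) - \<theta>\<bar> > \<epsilon>"
          moreover have "\<bar>alasso (\<mu> n) (sample_mean n y) - \<theta>\<bar> \<le> \<bar>sample_mean n y - \<theta>\<bar> + \<mu> n"
            by (rule alasso_bound[OF mu_pos])
          ultimately show "\<bar>sample_mean n y - \<theta>\<bar> \<ge> \<epsilon>/2" using mu by linarith
        qed
        also have "\<dots> = ?h n" by (simp add: power2_eq_square field_simps)
        finally show "measure (sample_law n \<theta>) {y \<in> space (sample_law n \<theta>).
                 \<bar>alasso (\<mu> n) (sample_mean n y) - \<theta>\<bar> > \<epsilon>} \<le> ?h n" .
      qed
    qed
    show "(\<lambda>n. 0) \<longlonglongrightarrow> 0" by simp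
    show "?h \<longlonglongrightarrow> 0" by (rule lim_const_over_n)
  qed
next
  fix \<epsilon> :: real assume e: "\<epsilon> > 0"
  define M where "M = 2 + 2 / \<epsilon>"
  have M1: "M - 1 \<ge> 1" and M2: "M - 1 \<ge> 2 / \<epsilon>" using e by (auto simp: M_def)
  have bnd: "1 / (M - 1)\<^sup>2 \<le> \<epsilon> / 2"
  proof -
    have "2 / \<epsilon> \<le> (M - 1)\<^sup>2" using M1 M2 by (smt (verit) power2_eq_square mult_le_cancel_left1)
    then show ?thesis using e M1 by (simp add: field_simps)
  qed
  show "\<exists>M::real. M \<ge> 0 \<and>
            (SUP n\<in>{1::nat..}. SUP \<theta>\<in>(UNIV::real set).
               measure (sample_law n \<theta>)
                 {y \<in> space (sample_law n \<theta>).
                    min (sqrt (real n)) (1 / \<mu> n) * \<bar>alasso (\<mu> n) (sample_mean n y) - \<theta>\<bar> > M})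
            < \<epsilon>"
  proof (intro exI conjI)
    show "M \<ge> 0" using M1 by simp
    have "(SUP n\<in>{1::nat..}. SUP \<theta>\<in>(UNIV::real set).
               measure (sample_law n \<theta>)
                 {y \<in> space (sample_law n \<theta>).
                    min (sqrt (real n)) (1 / \<mu> n) * \<bar>alasso (\<mu> n) (sample_mean n y) - \<theta>\<bar> > M}) \<le> \<epsilon> / 2"
    proof (rule cSUP_least)
      show "{1::nat..} \<noteq> {}" by auto
      fix n :: nat assume "n \<in> {1..}"
      then have n: "n \<ge> 1" by simp
      have sn: "sqrt (real n) > 0" using n by simp
      show "(SUP \<theta>\<in>(UNIV::real set).
               measure (sample_law n \<theta>)
                 {y \<in> space (sample_law n \<theta>).
                    min (sqrt (real n)) (1 / \<mu> n) * \<bar>alasso (\<mu> n) (sample_mean n y) - \<theta>\<bar> > M}) \<le> \<epsilon> / 2"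
      proof (rule sup_le)
        fix \<theta>
        have "measure (sample_law n \<theta>)
                 {y \<in> space (sample_law n \<theta>).
                    min (sqrt (real n)) (1 / \<mu> n) * \<bar>alasso (\<mu> n) (sample_mean n y) - \<theta>\<bar> > M}
               \<le> 1 / (real n * ((M - 1) / sqrt (real n))\<^sup>2)"
        proof (rule prob_bound[OF n])
          show "(M - 1) / sqrt (real n) > 0" using M1 sn by simp
          fix y
          assume A: "min (sqrt (real n)) (1 / \<mu> n) * \<bar>alasso (\<mu> n) (sample_mean n y) - \<theta>\<bar> > M"
          let ?a = "min (sqrt (real n)) (1 / \<mu> n)"
          let ?d = "\<bar>sample_mean n y - \<theta>\<bar>"
          have a0: "?a \<ge> 0" using mu_pos[of n] sn by simp
          have "?a * \<bar>alasso (\<mu> n) (sample_mean n y) - \<theta>\<bar> \<le> ?a * (?d + \<mu> n)"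
            by (rule mult_left_mono[OF alasso_bound[OF mu_pos] a0])
          also have "\<dots> = ?a * ?d + ?a * \<mu> n" by (simp add: algebra_simps)
          also have "?a * ?d \<le> sqrt (real n) * ?d" by (rule mult_right_mono) auto
          also have "?a * \<mu> n \<le> (1 / \<mu> n) * \<mu> n"
            by (rule mult_right_mono) (use mu_pos[of n] in auto)
          also have "(1 / \<mu> n) * \<mu> n = 1" using mu_pos[of n] by simp
          finally have "sqrt (real n) * ?d > M - 1" using A by linarith
          then show "?d \<ge> (M - 1) / sqrt (real n)" using sn by (simp add: field_simps)
        qed
        also have "\<dots> = 1 / (M - 1)\<^sup>2" using sn n by (simp add: power_divide)
        also have "\<dots> \<le> \<epsilon> / 2" by (rule bnd)
        finally show "measure (sample_law n \<theta>)
                 {y \<in> space (sample_law n \<theta>).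
                    min (sqrt (real n)) (1 / \<mu> n) * \<bar>alasso (\<mu> n) (sample_mean n y) - \<theta>\<bar> > M} \<le> \<epsilon> / 2" .
      qed
    qed
    also have "\<epsilon> / 2 < \<epsilon>" using e by simp
    finally show "(SUP n\<in>{1::nat..}. SUP \<theta>\<in>(UNIV::real set).
               measure (sample_law n \<theta>)
                 {y \<in> space (sample_law n \<theta>).
                    min (sqrt (real n)) (1 / \<mu> n) * \<bar>alasso (\<mu> n) (sample_mean n y) - \<theta>\<bar> > M}) < \<epsilon>" .
  qed
qed

end
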